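(* Let $\chi$ be a kernel satisfying $(\chi_2)$ with $\eta>0$ and $m_5(\chi)<\infty$. Then for every $f\in\mathcal{UB}^{\bar\omega}_+(\mathbb{R}_+)$ and every $w\ge1$, $$\|MG^{\chi}_w f-f\|_{\bar\omega}\le \frac{64\,\Omega(f,1/w)}{\eta}\big[m_0(\chi)+m_5(\chi)\big];$$ equivalently, for all $x>0$, $|MG^{\chi}_w(f,x)-f(x)|\le \frac{64(1+\log^2x)\Omega(f,1/w)}{\eta}[m_0(\chi)+m_5(\chi)]$.
   Context: $\mathbb{R}_+$ denotes the positive reals; $\bigvee_{k\in\Lambda}T_k=\sup\{T_k:k\in\Lambda\}$. A kernel is a bounded measurable $\chi:\mathbb{R}_+\to\mathbb{R}$. Moments: $m_{\nu}(\chi)=\sup_{u>0}\bigvee_{k\in\mathbb{Z}}|\chi(e^{-k}u)||k-\log u|^{\nu}$. Condition $(\chi_2)$: $\eta:=\inf_{x\in[1,e]}\chi(x)$ exists. Weight $\bar\omega(x)=\frac1{1+\log^2x}$, $\|f\|_{\bar\omega}=\sup_{x>0}\bar\omega(x)|f(x)|$. $\mathcal{UB}^{\bar\omega}_+(\mathbb{R}_+)$: nonnegative $f$ such that $\bar\omega f$ is bounded and log-uniformly continuous (for every $\epsilon>0$ there is $\delta>0$ with $|g(x)-g(y)|<\epsilon$ whenever $|\log x-\log y|\le\delta$). Weighted logarithmic modulus of continuity: $\Omega(f,\delta)=\sup_{|\log t|\le\delta,\ x>0}\frac{|f(tx)-f(x)|}{(1+\log^2x)(1+\log^2t)}$. Operator: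 $MG^{\chi}_w(f,x)=\frac{\bigvee_{k\in\mathbb{Z}}\chi(e^{-k}x^{w})f(e^{k/w})}{\bigvee_{k\in\mathbb{Z}}\chi(e^{-k}x^{w})}$. *)

theory Defs
  imports "HOL-Analysis.Analysis"
begin

definition is_kernel :: "(real \<Rightarrow> real) \<Rightarrow> bool" where
  "is_kernel K \<longleftrightarrow> K \<in> borel_measurable (restrict_space borel {(0::real)<..}) \<and> bounded (K ` {(0::real)<..})"

definition moment :: "nat \<Rightarrow> (real \<Rightarrow> real) \<Rightarrow> ereal" where
  "moment \<nu> K = (SUP u\<in>{(0::real)<..}. SUP k\<in>(UNIV::int set).
      ereal (\<bar>K (exp (- real_of_int k) * u)\<bar> * \<bar>real_of_int k - ln u\<bar> ^ \<nu>))"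

definition eta :: "(real \<Rightarrow> real) \<Rightarrow> real" where
  "eta K = Inf (K ` {1..exp 1})"

definition omega_bar :: "real \<Rightarrow> real" where
  "omega_bar x = 1 / (1 + (ln x)^2)"

definition log_unif_cont :: "(real \<Rightarrow> real) \<Rightarrow> bool" where
  "log_unif_cont g \<longleftrightarrow> (\<forall>\<epsilon>>0. \<exists>\<delta>>0. \<forall>x>0. \<forall>y>0.
      \<bar>ln x - ln y\<bar> \<le> \<delta> \<longrightarrow> \<bar>g x - g y\<bar> < \<epsilon>)"

definition UB_plus :: "(real \<Rightarrow> real) set" where
  "UB_plus = {f. (\<forall>x>0. f x \<ge> 0) \<and> bounded ((\<lambda>x. omega_bar x * f x) ` {(0::real)<..})
      \<and> log_unif_cont (\<lambda>x. omega_bar x * f x)}"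

definition mod_cont :: "(real \<Rightarrow> real) \<Rightarrow> real \<Rightarrow> real" where
  "mod_cont f \<delta> = Sup {\<bar>f (t * x) - f x\<bar> / ((1 + (ln x)^2) * (1 + (ln t)^2)) | t x.
      t > 0 \<and> x > 0 \<and> \<bar>ln t\<bar> \<le> \<delta>}"

definition MG :: "(real \<Rightarrow> real) \<Rightarrow> real \<Rightarrow> (real \<Rightarrow> real) \<Rightarrow> real \<Rightarrow> real" where
  "MG K w f x =
     (SUP k\<in>(UNIV::int set). K (exp (- real_of_int k) * x powr w) * f (exp (real_of_int k / w)))
     / (SUP k\<in>(UNIV::int set). K (exp (- real_of_int k) * x powr w))"

end

theory Submission imports Defs begin
lemma pow_le_1_5:
  fixes a :: real assumes "a \<ge> 0" "j \<le> 5"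
  shows "a ^ j \<le> 1 + a ^ 5"
proof (cases "a \<le> 1")
  case True
  then have "a ^ j \<le> 1" using assms by (simp add: power_le_one)
  moreover have "0 \<le> a ^ 5" using assms by simp
  ultimately show ?thesis by linarith
next
  case False
  then have "a ^ j \<le> a ^ 5" using assms by (intro power_increasing) auto
  then show ?thesis by simp
qed

lemma poly_bound:
  fixes a :: real assumes "a \<ge> 0"
  shows "(1 + a^2) * (1 + a) \<le> 4 * (1 + a ^ 5)"
proof -
  have eq: "(1 + a^2) * (1 + a) = 1 + a + a^2 + a^3" by (simp add: algebra_simps power2_eq_square power3_eq_cube)
  have "a \<le> 1 + a^5" using pow_le_1_5[OF assms, of 1] by simp
  moreover have "a^2 \<le> 1 + a^5" using pow_le_1_5[OF assms, of 2] by simp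
  moreover have "a^3 \<le> 1 + a^5" using pow_le_1_5[OF assms, of 3] by simp
  moreover have "0 \<le> a^5" using assms by simp
  ultimately show ?thesis unfolding eq by (smt (verit))
qed

lemma sq_sum_le:
  fixes a b :: real shows "(a + b)^2 \<le> 2*a^2 + 2*b^2"
proof -
  have "0 \<le> (a - b)^2" by simp
  then show ?thesis unfolding power2_sum power2_diff by linarith
qed

lemma chain:
  fixes f :: "real \<Rightarrow> real"
  assumes A: "\<And>t y. t>0 \<Longrightarrow> y>0 \<Longrightarrow> \<bar>ln t\<bar> \<le> d \<Longrightarrow> \<bar>f(t*y) - f y\<bar> \<le> Om*(1+(ln y)^2)*(1+(ln t)^2)"
    and s: "\<bar>s\<bar> \<le> d" and y: "y>0"
  shows "\<bar>f(exp(real n * s) * y) - f y\<bar> \<le> (\<Sum>j<n. Om*(1+(ln y + real j * s)^2)*(1+s^2))"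
proof (induction n)
  case 0 then show ?case by simp
next
  case (Suc n)
  define y' where "y' = exp(real n * s) * y"
  have y'pos: "y' > 0" using y by (simp add: y'_def)
  have lny': "ln y' = ln y + real n * s" using y by (simp add: y'_def ln_mult)
  have "exp(real (Suc n) * s) = exp s * exp(real n * s)"
    by (simp add: distrib_right exp_add)
  then have e: "exp(real (Suc n) * s) * y = exp s * y'"
    by (simp add: y'_def)
  have "\<bar>f(exp s * y') - f y'\<bar> \<le> Om*(1+(ln y')^2)*(1+(ln (exp s))^2)"
    using A[of "exp s" y'] y'pos s by simp
  then have "\<bar>f(exp s * y') - f y'\<bar> \<le> Om*(1+(ln y + real n * s)^2)*(1+s^2)"
    by (simp add: lny')
  then show ?case using Suc unfolding e y'_def[symmetric] by simp
qed

lemma chain_bound: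
  fixes f :: "real \<Rightarrow> real"
  assumes A: "\<And>t y. t>0 \<Longrightarrow> y>0 \<Longrightarrow> \<bar>ln t\<bar> \<le> d \<Longrightarrow> \<bar>f(t*y) - f y\<bar> \<le> Om*(1+(ln y)^2)*(1+(ln t)^2)"
    and s: "\<bar>s\<bar> \<le> d" and y: "y>0" and d1: "d \<le> 1" and Om: "Om \<ge> 0"
    and L: "real n * \<bar>s\<bar> \<le> L"
  shows "\<bar>f(exp(real n * s) * y) - f y\<bar> \<le> real n * (4*Om*(1+(ln y)^2)*(1+L^2))"
proof -
  have "(\<Sum>j<n. Om*(1+(ln y + real j * s)^2)*(1+s^2)) \<le> (\<Sum>j<n. 4*Om*(1+(ln y)^2)*(1+L^2))"
  proof (rule sum_mono)
    fix j assume "j \<in> {..<n}"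
    then have jn: "real j \<le> real n" by simp
    have "\<bar>real j * s\<bar> = real j * \<bar>s\<bar>" by (simp add: abs_mult)
    also have "\<dots> \<le> real n * \<bar>s\<bar>" using jn by (intro mult_right_mono) auto
    finally have "\<bar>real j * s\<bar> \<le> L" using L by linarith
    then have js: "(real j * s)^2 \<le> L^2"
      by (metis abs_ge_zero power2_abs power_mono)
    have "(ln y + real j * s)^2 \<le> 2*(ln y)^2 + 2*(real j * s)^2" by (rule sq_sum_le)
    moreover have "0 \<le> (ln y)^2 * L^2" by simp
    moreover have "2*((1+(ln y)^2)*(1+L^2)) = 2 + 2*(ln y)^2 + 2*L^2 + 2*((ln y)^2 * L^2)"
      by (simp add: algebra_simps)
    ultimately have h1: "1+(ln y + real j * s)^2 \<le> 2*((1+(ln y)^2)*(1+L^2))"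
      using js by linarith
    have "\<bar>s\<bar> \<le> 1" using s d1 by linarith
    then have "\<bar>s\<bar>^2 \<le> 1^2" by (intro power_mono) auto
    then have "s^2 \<le> 1" by simp
    then have h2: "1 + s^2 \<le> 2" by simp
    have "Om*(1+(ln y + real j * s)^2)*(1+s^2) \<le> Om*(2*((1+(ln y)^2)*(1+L^2)))*2"
      using h1 h2 Om by (intro mult_mono) auto
    then show "Om*(1+(ln y + real j * s)^2)*(1+s^2) \<le> 4*Om*(1+(ln y)^2)*(1+L^2)" by simp
  qed
  then show ?thesis using chain[OF A s y, of n] by simp
qed

lemma step_bound:
  fixes f :: "real \<Rightarrow> real"
  assumes A: "\<And>t y. t>0 \<Longrightarrow> y>0 \<Longrightarrow> \<bar>ln t\<bar> \<le> d \<Longrightarrow> \<bar>f(t*y) - f y\<bar> \<le> Om*(1+(ln y)^2)*(1+(ln t)^2)"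
    and y: "y>0" and z: "z > 0" and d0: "d > 0" and d1: "d \<le> 1" and Om: "Om \<ge> 0"
  shows "\<bar>f z - f y\<bar> \<le> 4*Om*(1+(ln y)^2)*(1+(\<bar>ln z - ln y\<bar>)^2)*(1+\<bar>ln z - ln y\<bar>/d)"
proof -
  define L where "L = \<bar>ln z - ln y\<bar>"
  define n where "n = nat \<lceil>L/d\<rceil>"
  have L0: "L \<ge> 0" by (simp add: L_def)
  have Ld0: "L/d \<ge> 0" using L0 d0 by simp
  have nge: "real n \<ge> L/d" unfolding n_def by (metis of_nat_nat real_nat_ceiling_ge)
  have "real n = real_of_int \<lceil>L/d\<rceil>" unfolding n_def using Ld0 by simp
  then have nle: "real n \<le> 1 + L/d" by linarith
  have P0: "0 \<le> 4*Om*(1+(ln y)^2)*(1+L^2)" using Om by simp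
  show ?thesis
  proof (cases "n = 0")
    case True
    then have "L/d \<le> 0" using nge by simp
    then have "L = 0" using L0 d0 by (simp add: divide_le_0_iff)
    then have "ln z = ln y" by (simp add: L_def)
    then have "z = y" using y z by simp
    then show ?thesis using P0 d0 Om by (simp add: L_def)
  next
    case False
    define s where "s = (ln z - ln y) / real n"
    have sabs: "\<bar>s\<bar> = L / real n" by (simp add: s_def L_def)
    have "L \<le> real n * d" using nge d0 by (simp add: pos_divide_le_eq)
    then have "\<bar>s\<bar> \<le> d" using False unfolding sabs
      by (simp add: pos_divide_le_eq mult.commute)
    moreover have "real n * \<bar>s\<bar> \<le> L" using False sabs by simp
    moreover have "exp(real n * s) * y = z" using False y z by (simp add: s_def exp_diff)
    ultimately have "\<bar>f z - f y\<bar> \<le> real n * (4*Om*(1+(ln y)^2)*(1+L^2))"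
      using chain_bound[OF A _ y d1 Om] by metis
    also have "\<dots> \<le> (1 + L/d) * (4*Om*(1+(ln y)^2)*(1+L^2))"
      using nle P0 by (intro mult_right_mono) auto
    finally show ?thesis by (simp add: L_def mult_ac)
  qed
qed
lemma real_of_ereal_ge:
  assumes "ereal a \<le> m" "m < \<infinity>" shows "a \<le> real_of_ereal m"
  using assms by (cases m) auto

theorem theorem3p4:
  fixes K f :: "real \<Rightarrow> real" and w x :: real
  assumes "is_kernel K"
    and "eta K > 0"
    and "moment 5 K < \<infinity>"
    and "f \<in> UB_plus"
    and "w \<ge> 1"
    and "x > 0"
  shows "\<bar>MG K w f x - f x\<bar> \<le>
    64 * (1 + (ln x)^2) * mod_cont f (1 / w) / eta K
      * (real_of_ereal (moment 0 K) + real_of_ereal (moment 5 K))"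
proof -
  have xpos: "x > 0" and w1: "w \<ge> 1" using assms by auto
  have w0: "w > 0" using w1 by simp
  from assms(4) have fpos: "\<And>y. y>0 \<Longrightarrow> f y \<ge> 0"
    and bnd: "bounded ((\<lambda>x. omega_bar x * f x) ` {(0::real)<..})" by (auto simp: UB_plus_def)
  obtain B where B: "\<And>y. y>0 \<Longrightarrow> \<bar>omega_bar y * f y\<bar> \<le> B"
    using bnd unfolding bounded_iff by auto
  have fb: "\<bar>f y\<bar> \<le> B*(1+(ln y)^2)" if y: "y>0" for y
  proof -
    have p: "1+(ln y)^2 > 0" by (simp add: add_pos_nonneg)
    have "\<bar>omega_bar y * f y\<bar> = \<bar>f y\<bar> / (1+(ln y)^2)" using p by (simp add: omega_bar_def abs_mult)
    then show ?thesis using B[OF y] p by (simp add: pos_divide_le_eq)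
  qed
  have B0: "B \<ge> 0" using fb[of 1] by simp
  have qb: "\<bar>f(t*y) - f y\<bar> / ((1+(ln y)^2)*(1+(ln t)^2)) \<le> 3*B" if t: "t>0" and y: "y>0" for t y
  proof -
    define a where "a = (ln t)^2"
    define b where "b = (ln y)^2"
    have a0: "a \<ge> 0" and b0: "b \<ge> 0" by (simp_all add: a_def b_def)
    have p: "(1+(ln y)^2)*(1+(ln t)^2) > 0" by (simp add: add_pos_nonneg)
    have "\<bar>f(t*y)\<bar> \<le> B*(1+(ln t + ln y)^2)" using fb[of "t*y"] t y by (simp add: ln_mult)
    also have "\<dots> \<le> B*(1+2*a+2*b)" unfolding a_def b_def
      using sq_sum_le[of "ln t" "ln y"] B0 by (intro mult_left_mono) auto
    finally have h1: "\<bar>f(t*y)\<bar> \<le> B + 2*(B*a) + 2*(B*b)" by (simp add: algebra_simps)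
    have h2: "\<bar>f y\<bar> \<le> B + B*b" using fb[OF y] by (simp add: b_def algebra_simps)
    have e: "3*B*((1+(ln y)^2)*(1+(ln t)^2)) = 3*B + 3*(B*a) + 3*(B*b) + 3*(B*(a*b))"
      by (simp add: a_def b_def algebra_simps)
    have "0 \<le> B*(a*b)" "0 \<le> B*a" "0 \<le> B*b" using B0 a0 b0 by simp_all
    moreover have "\<bar>f(t*y) - f y\<bar> \<le> \<bar>f(t*y)\<bar> + \<bar>f y\<bar>" by (rule abs_triangle_ineq4)
    ultimately have "\<bar>f(t*y) - f y\<bar> \<le> 3*B*((1+(ln y)^2)*(1+(ln t)^2))"
      unfolding e using h1 h2 B0 by linarith
    then show ?thesis using p by (simp add: pos_divide_le_eq)
  qed
  define Om where "Om = mod_cont f (1/w)"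
  have bddS: "bdd_above {\<bar>f (t * y) - f y\<bar> / ((1 + (ln y)^2) * (1 + (ln t)^2)) | t y. t > 0 \<and> y > 0 \<and> \<bar>ln t\<bar> \<le> 1/w}"
    unfolding bdd_above_def using qb by blast
  have A: "\<bar>f(t*y) - f y\<bar> \<le> Om*(1+(ln y)^2)*(1+(ln t)^2)"
    if t: "t>0" and y: "y>0" and lt: "\<bar>ln t\<bar> \<le> 1/w" for t y
  proof -
    have p: "(1+(ln y)^2)*(1+(ln t)^2) > 0" by (simp add: add_pos_nonneg)
    have "\<bar>f(t*y) - f y\<bar> / ((1+(ln y)^2)*(1+(ln t)^2)) \<le> Om"
      unfolding Om_def mod_cont_def using t y lt by (intro cSup_upper[OF _ bddS]) blast
    then show ?thesis using p by (simp add: pos_divide_le_eq mult_ac)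
  qed
  have Om0: "Om \<ge> 0" using A[of 1 1] w0 by simp
  obtain C where C: "\<And>y. y>0 \<Longrightarrow> \<bar>K y\<bar> \<le> C"
    using assms(1) unfolding is_kernel_def bounded_iff by auto
  have mom_le: "ereal (\<bar>K (exp (- real_of_int k) * u)\<bar> * \<bar>real_of_int k - ln u\<bar> ^ \<nu>) \<le> moment \<nu> K"
    if u: "u > 0" for \<nu> k u
  proof -
    have "ereal (\<bar>K (exp (- real_of_int k) * u)\<bar> * \<bar>real_of_int k - ln u\<bar> ^ \<nu>)
      \<le> (SUP k\<in>(UNIV::int set). ereal (\<bar>K (exp (- real_of_int k) * u)\<bar> * \<bar>real_of_int k - ln u\<bar> ^ \<nu>))"
      by (rule SUP_upper) simp
    also have "\<dots> \<le> moment \<nu> K" unfolding moment_def using u by (intro SUP_upper) simp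
    finally show ?thesis .
  qed
  have m0fin: "moment 0 K \<le> ereal C" unfolding moment_def
    by (intro SUP_least) (simp add: C)
  then have m0inf: "moment 0 K < \<infinity>" using le_less_trans[OF m0fin, of \<infinity>] by simp
  define u where "u = x powr w"
  have u0: "u > 0" using xpos by (simp add: u_def)
  have lnu: "ln u = w * ln x" using xpos by (simp add: u_def ln_powr)
  define m0 where "m0 = real_of_ereal (moment 0 K)"
  define m5 where "m5 = real_of_ereal (moment 5 K)"
  have Km0: "\<bar>K (exp (- real_of_int k) * u)\<bar> \<le> m0" for k
    using real_of_ereal_ge[OF mom_le[OF u0, of k 0] m0inf] by (simp add: m0_def)
  have Km5: "\<bar>K (exp (- real_of_int k) * u)\<bar> * \<bar>real_of_int k - ln u\<bar> ^ 5 \<le> m5" for k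
    using real_of_ereal_ge[OF mom_le[OF u0, of k 5] assms(3)] by (simp add: m5_def)
  define E where "E = 16*Om*(1+(ln x)^2)*(m0+m5)"
  have key: "\<bar>K (exp (- real_of_int k) * u) * f (exp (real_of_int k / w)) - K (exp (- real_of_int k) * u) * f x\<bar> \<le> E" for k :: int
  proof -
    define v where "v = real_of_int k - ln u"
    define Kk where "Kk = K (exp (- real_of_int k) * u)"
    have lz: "ln (exp (real_of_int k / w)) - ln x = v / w" using lnu w0 by (simp add: v_def field_simps)
    have sb: "\<bar>f (exp (real_of_int k / w)) - f x\<bar> \<le> 4*Om*(1+(ln x)^2)*(1+(\<bar>v/w\<bar>)^2)*(1+\<bar>v/w\<bar>/(1/w))"
      using step_bound[where d="1/w", OF A xpos exp_gt_zero _ _ Om0, of "real_of_int k / w"] w1 w0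
      unfolding lz by simp
    have "\<bar>v\<bar> * 1 \<le> \<bar>v\<bar> * w" using w1 by (intro mult_left_mono) auto
    then have avw: "\<bar>v/w\<bar> \<le> \<bar>v\<bar>" using w0 by (simp add: pos_divide_le_eq)
    then have q2: "(\<bar>v/w\<bar>)^2 \<le> \<bar>v\<bar>^2" by (intro power_mono) auto
    have r: "\<bar>v/w\<bar>/(1/w) = \<bar>v\<bar>" using w0 by simp
    define P where "P = 4*Om*(1+(ln x)^2)"
    have P0: "P \<ge> 0" using Om0 by (simp add: P_def)
    have "\<bar>f (exp (real_of_int k / w)) - f x\<bar> \<le> P*(1+(\<bar>v/w\<bar>)^2)*(1+\<bar>v\<bar>)"
      using sb unfolding r P_def .
    also have "\<dots> \<le> P*(1+\<bar>v\<bar>^2)*(1+\<bar>v\<bar>)"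
      using q2 P0 by (intro mult_right_mono mult_left_mono) auto
    finally have "\<bar>f (exp (real_of_int k / w)) - f x\<bar> \<le> 4*Om*(1+(ln x)^2)*((1+\<bar>v\<bar>^2)*(1+\<bar>v\<bar>))"
      by (simp add: P_def mult_ac)
    also have "\<dots> \<le> 4*Om*(1+(ln x)^2)*(4*(1+\<bar>v\<bar>^5))"
      using poly_bound[of "\<bar>v\<bar>"] Om0 by (intro mult_left_mono) auto
    also have "\<dots> = 16*Om*(1+(ln x)^2)*(1+\<bar>v\<bar>^5)" by (simp add: algebra_simps)
    finally have fd: "\<bar>f (exp (real_of_int k / w)) - f x\<bar> \<le> 16*Om*(1+(ln x)^2)*(1+\<bar>v\<bar>^5)" .
    have "\<bar>Kk * f (exp (real_of_int k / w)) - Kk * f x\<bar> = \<bar>Kk\<bar> * \<bar>f (exp (real_of_int k / w)) - f x\<bar>"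
      by (simp add: abs_mult right_diff_distrib[symmetric])
    also have "\<dots> \<le> \<bar>Kk\<bar> * (16*Om*(1+(ln x)^2)*(1+\<bar>v\<bar>^5))"
      using fd by (intro mult_left_mono) auto
    also have "\<dots> = 16*Om*(1+(ln x)^2)*(\<bar>Kk\<bar> + \<bar>Kk\<bar>*\<bar>v\<bar>^5)" by (simp add: algebra_simps)
    also have "\<dots> \<le> 16*Om*(1+(ln x)^2)*(m0+m5)"
      using Km0[of k] Km5[of k] Om0 unfolding Kk_def v_def by (intro mult_left_mono) auto
    finally show ?thesis unfolding Kk_def E_def .
  qed
  have E0: "E \<ge> 0" using key[of 0] by linarith
  define c where "c = f x"
  have c0: "c \<ge> 0" using fpos xpos by (simp add: c_def)
  define N where "N = (SUP k\<in>(UNIV::int set). K (exp (- real_of_int k) * u) * f (exp (real_of_int k / w)))"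
  define D where "D = (SUP k\<in>(UNIV::int set). K (exp (- real_of_int k) * u))"
  have MGeq: "MG K w f x = N / D" unfolding MG_def N_def D_def u_def ..
  have bddK: "bdd_above (range (\<lambda>k::int. K (exp (- real_of_int k) * u)))"
    by (rule bdd_aboveI2[where M=m0]) (use Km0 in \<open>auto simp: abs_le_iff\<close>)
  have ak: "K (exp (- real_of_int k) * u) * f (exp (real_of_int k / w)) \<le> K (exp (- real_of_int k) * u) * c + E"
    and ak2: "K (exp (- real_of_int k) * u) * c \<le> K (exp (- real_of_int k) * u) * f (exp (real_of_int k / w)) + E" for k
    using key[of k] unfolding c_def by linarith+
  have bddA: "bdd_above (range (\<lambda>k::int. K (exp (- real_of_int k) * u) * f (exp (real_of_int k / w))))"
  proof (rule bdd_aboveI2[where M="m0*c+E"])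
    fix k :: int
    have "K (exp (- real_of_int k) * u) * c \<le> m0 * c"
      using Km0[of k] c0 by (intro mult_right_mono) auto
    then show "K (exp (- real_of_int k) * u) * f (exp (real_of_int k / w)) \<le> m0*c+E"
      using ak[of k] by linarith
  qed
  define k0 where "k0 = \<lfloor>ln u\<rfloor>"
  have ek: "exp (- real_of_int k0) * u = exp (ln u - real_of_int k0)"
    using u0 by (simp add: exp_diff exp_minus divide_inverse mult.commute)
  have i1: "0 \<le> ln u - real_of_int k0" and i2: "ln u - real_of_int k0 \<le> 1" unfolding k0_def by linarith+
  have "1 \<le> exp (ln u - real_of_int k0)" using i1 by simp
  moreover have "exp (ln u - real_of_int k0) \<le> exp 1" using i2 by simp
  ultimately have mem: "exp (- real_of_int k0) * u \<in> {1..exp 1}" unfolding ek by simp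
  have bddb: "bdd_below (K ` {1..exp 1})"
  proof (rule bdd_belowI2[where m="-C"])
    fix y :: real assume "y \<in> {1..exp 1}"
    then have "y > 0" by simp
    then have "\<bar>K y\<bar> \<le> C" by (rule C)
    then show "- C \<le> K y" by linarith
  qed
  have "eta K \<le> K (exp (- real_of_int k0) * u)" unfolding eta_def
    by (rule cInf_lower[OF imageI[OF mem] bddb])
  also have "K (exp (- real_of_int k0) * u) \<le> D" unfolding D_def by (rule cSUP_upper[OF _ bddK]) simp
  finally have etaD: "eta K \<le> D" .
  have D0: "D > 0" using etaD assms(2) by linarith
  have up: "N \<le> D*c + E" unfolding N_def
  proof (rule cSUP_least)
    fix k :: int
    have "K (exp (- real_of_int k) * u) \<le> D" unfolding D_def by (rule cSUP_upper[OF _ bddK]) simp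
    then have "K (exp (- real_of_int k) * u) * c \<le> D * c" using c0 by (intro mult_right_mono)
    then show "K (exp (- real_of_int k) * u) * f (exp (real_of_int k / w)) \<le> D*c + E"
      using ak[of k] by linarith
  qed simp
  have Nk: "K (exp (- real_of_int k) * u) * f (exp (real_of_int k / w)) \<le> N" for k
    unfolding N_def by (rule cSUP_upper[OF _ bddA]) simp
  have low: "D*c \<le> N + E"
  proof (cases "c = 0")
    case True
    then show ?thesis using ak2[of 0] Nk[of 0] by simp
  next
    case False
    then have cp: "c > 0" using c0 by simp
    have "D \<le> (N+E)/c" unfolding D_def
    proof (rule cSUP_least)
      fix k :: int
      show "K (exp (- real_of_int k) * u) \<le> (N+E)/c"
        using ak2[of k] Nk[of k] cp by (simp add: pos_le_divide_eq)
    qed simp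
    then show ?thesis using cp by (simp add: pos_le_divide_eq mult.commute)
  qed
  have ab: "\<bar>N - D*c\<bar> \<le> E" using up low by linarith
  have "N / D - c = (N - D*c) / D" using D0 by (simp add: diff_divide_distrib)
  then have "\<bar>MG K w f x - f x\<bar> = \<bar>N - D*c\<bar> / D"
    unfolding MGeq c_def[symmetric] using D0 by simp
  also have "\<dots> \<le> E / D" using ab D0 by (intro divide_right_mono) auto
  also have "\<dots> \<le> E / eta K" using E0 etaD assms(2) by (intro divide_left_mono) auto
  also have "\<dots> \<le> 4 * E / eta K" using E0 assms(2) by (intro divide_right_mono) auto
  also have "4 * E / eta K = 64 * (1 + (ln x)^2) * mod_cont f (1 / w) / eta K
      * (real_of_ereal (moment 0 K) + real_of_ereal (moment 5 K))"
    unfolding E_def Om_def m0_def m5_def by (simp add: field_simps)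
  finally show ?thesis .
qed
end
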